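(* Suppose $D=dH-\sum_im_iE_i$ is an effective divisor class on $X$ with $\chi(D)\ge1$, and $A_t$ is an ample divisor with $2A_t\cdot D\le A_t\cdot K$. Let $\chi_{\max}$ be the maximal value of $\chi(D')$ among effective divisor classes $D'$ satisfying $2A_t\cdot D'\le A_t\cdot K$, and put $\ell=\chi_{\max}-\chi(D)$. Then $D$ is at most $\ell$ steps away from having balanced multiplicities. In particular, if additionally $10\le n\le 17$, then $\chi(D)=\chi_{\max}=1$ and $D$ is balanced.
   Context: Let $X$ be the blowup of $\mathbb{P}^2_{\mathbb{C}}$ at $n$ very general points, with $H$ the pullback of a line class, $E_i$ the exceptional divisors, $E=\sum_iE_i$, and $K=K_X=-3H+E$. For real $t$, $A_t=tH-E$. Write $\chi(D)=\chi(\mathcal{O}_X(D))$; effective means the class of an effective divisor (zero allowed). A divisor $D=dH-\sum_im_iE_i$ has balanced multiplicities (is balanced) if $|m_i-m_j|\le1$ for all $i,j$. If $D$ is not balanced, form a sequence $D=D_0,D_1,\dots,D_k$ by repeatedly increasing one of the smallest multiplicities by $1$ and decreasing one of the largest multiplicities by $1$, stopping at the first balanced divisor $D_k$; then $D$ is said to be $k$ steps away from having balanced multiplicities ($k$ is independent of choices; a balanced $D$ is $0$ steps away). *)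

theory Defs
  imports Complex_Main
begin

text \<open>Setting: X is the blowup of the complex projective plane at n points
 p 0, ..., p (n-1), given in the affine chart z = 1 as pairs of complex numbers.
 A divisor class D = dH - sum_i m_i E_i is encoded by d :: int and m :: nat => int
 (only the values m i for i < n matter).\<close>

text \<open>Very general points: the 2n affine coordinates are algebraically
 independent over the rationals (no nonzero integer polynomial vanishes on them).\<close>
definition coord :: "(nat \<Rightarrow> complex \<times> complex) \<Rightarrow> nat \<Rightarrow> complex" where
  "coord p k = (if even k then fst (p (k div 2)) else snd (p (k div 2)))"

definition very_general :: "nat \<Rightarrow> (nat \<Rightarrow> complex \<times> complex) \<Rightarrow> bool" where
  "very_general n p \<longleftrightarrow>
     (\<forall>(S :: (nat \<Rightarrow> nat) set) (c :: (nat \<Rightarrow> nat) \<Rightarrow> int).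
        finite S \<and> (\<forall>e\<in>S. \<forall>k. 2 * n \<le> k \<longrightarrow> e k = 0) \<and> (\<exists>e\<in>S. c e \<noteq> 0) \<longrightarrow>
        (\<Sum>e\<in>S. of_int (c e) * (\<Prod>k<2 * n. coord p k ^ e k)) \<noteq> 0)"

text \<open>A polynomial of degree at most dg in x, y is given by coefficients
 c (a, b) of x^a y^b, a + b <= dg. It vanishes to order at least mu at (u, v)
 iff all coefficients of total degree < mu of f(u + X, v + Y) vanish.\<close>
definition vanishes_to_order ::
  "nat \<Rightarrow> (nat \<times> nat \<Rightarrow> complex) \<Rightarrow> complex \<times> complex \<Rightarrow> int \<Rightarrow> bool" where
  "vanishes_to_order dg c pt mu \<longleftrightarrow>
     (\<forall>i j. int (i + j) < mu \<longrightarrow>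
        (\<Sum>a\<le>dg. \<Sum>b\<le>dg - a. c (a, b) * of_nat (a choose i) * of_nat (b choose j)
             * fst pt ^ (a - i) * snd pt ^ (b - j)) = 0)"

text \<open>Effective class dH - sum m_i E_i: there is a nonzero plane curve of degree d
 with multiplicity at least m_i at p_i (negative m_i impose no condition,
 the corresponding -m_i E_i being added as fixed components).\<close>
definition effective :: "nat \<Rightarrow> (nat \<Rightarrow> complex \<times> complex) \<Rightarrow> int \<Rightarrow> (nat \<Rightarrow> int) \<Rightarrow> bool" where
  "effective n p d m \<longleftrightarrow> 0 \<le> d \<and>
     (\<exists>c. (\<exists>a b. a + b \<le> nat d \<and> c (a, b) \<noteq> 0) \<and>
          (\<forall>k<n. vanishes_to_order (nat d) c (p k) (m k)))"

definition chi :: "nat \<Rightarrow> int \<Rightarrow> (nat \<Rightarrow> int) \<Rightarrow> int" where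
  "chi n d m = ((d + 1) * (d + 2)) div 2 - (\<Sum>i<n. (m i * (m i + 1)) div 2)"

text \<open>Intersection A_t . D for D = dH - sum m_i E_i, A_t = tH - E.\<close>
definition At_dot :: "nat \<Rightarrow> real \<Rightarrow> int \<Rightarrow> (nat \<Rightarrow> int) \<Rightarrow> real" where
  "At_dot n t d m = t * of_int d - of_int (\<Sum>i<n. m i)"

text \<open>A_t . K with K = -3H + E.\<close>
definition At_dot_K :: "nat \<Rightarrow> real \<Rightarrow> real" where
  "At_dot_K n t = real n - 3 * t"

text \<open>Ampleness of the R-divisor A_t (Nakai-Moishezon criterion for R-divisors):
 A_t^2 > 0 and A_t . D > 0 for every nonzero effective class D.\<close>
definition ample_At :: "nat \<Rightarrow> (nat \<Rightarrow> complex \<times> complex) \<Rightarrow> real \<Rightarrow> bool" where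
  "ample_At n p t \<longleftrightarrow> t ^ 2 - real n > 0 \<and>
     (\<forall>d m. effective n p d m \<and> \<not> (d = 0 \<and> (\<forall>i<n. m i = 0)) \<longrightarrow> At_dot n t d m > 0)"

definition balanced :: "nat \<Rightarrow> (nat \<Rightarrow> int) \<Rightarrow> bool" where
  "balanced n m \<longleftrightarrow> (\<forall>i<n. \<forall>j<n. \<bar>m i - m j\<bar> \<le> 1)"

definition bal_step :: "nat \<Rightarrow> (nat \<Rightarrow> int) \<Rightarrow> (nat \<Rightarrow> int) \<Rightarrow> bool" where
  "bal_step n m m' \<longleftrightarrow>
     (\<exists>i<n. \<exists>j<n. (\<forall>k<n. m k \<le> m i) \<and> (\<forall>k<n. m j \<le> m k) \<and>
                   m' = m(i := m i - 1, j := m j + 1))"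

definition steps_away :: "nat \<Rightarrow> (nat \<Rightarrow> int) \<Rightarrow> nat \<Rightarrow> bool" where
  "steps_away n m k \<longleftrightarrow>
     (\<exists>ms :: nat \<Rightarrow> nat \<Rightarrow> int. ms 0 = m \<and>
        (\<forall>s<k. \<not> balanced n (ms s) \<and> bal_step n (ms s) (ms (Suc s))) \<and>
        balanced n (ms k))"

end

theory Submission
  imports Defs
begin

lemma homog_solve:
  fixes f :: "'e \<Rightarrow> 'v \<Rightarrow> 'a::field"
  assumes "finite E" "finite V" "card E < card V"
  shows "\<exists>x. (\<exists>v\<in>V. x v \<noteq> 0) \<and> (\<forall>e\<in>E. (\<Sum>v\<in>V. f e v * x v) = 0)"
  using assms
proof (induction E arbitrary: V f rule: finite_induct)
  case empty
  then obtain v where "v \<in> V" by (metis card.empty card_gt_0_iff ex_in_conv)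
  then show ?case by (intro exI[of _ "\<lambda>w. 1"]) auto
next
  case (insert e E)
  show ?case
  proof (cases "\<forall>v\<in>V. f e v = 0")
    case True
    from insert.IH[of V f] insert.prems insert.hyps obtain x where
      x: "(\<exists>v\<in>V. x v \<noteq> 0)" "(\<forall>e\<in>E. (\<Sum>v\<in>V. f e v * x v) = 0)" by auto
    then show ?thesis using True by (intro exI[of _ x]) auto
  next
    case False
    then obtain v0 where v0: "v0 \<in> V" "f e v0 \<noteq> 0" by auto
    define V' where "V' = V - {v0}"
    define f' where "f' = (\<lambda>e' v. f e' v - f e' v0 / f e v0 * f e v)"
    have cV': "card V' = card V - 1" using v0 insert.prems by (simp add: V'_def)
    have "card E < card V'" using insert.prems insert.hyps cV' by auto
    from insert.IH[of V' f'] this insert.prems obtain x' where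
      x': "(\<exists>v\<in>V'. x' v \<noteq> 0)" "(\<forall>e\<in>E. (\<Sum>v\<in>V'. f' e v * x' v) = 0)"
      by (auto simp: V'_def)
    define x where "x = (\<lambda>v. if v = v0 then - (\<Sum>v\<in>V'. f e v * x' v) / f e v0 else x' v)"
    have fin: "finite V'" using insert.prems by (simp add: V'_def)
    have split: "(\<Sum>v\<in>V. g v) = g v0 + (\<Sum>v\<in>V'. g v)" for g :: "'v \<Rightarrow> 'a"
      using v0 insert.prems by (simp add: V'_def sum.remove)
    have xV': "\<And>v. v \<in> V' \<Longrightarrow> x v = x' v" by (auto simp: x_def V'_def)
    have e0: "(\<Sum>v\<in>V. f e v * x v) = 0"
      using v0 by (simp add: split xV' cong: sum.cong) (simp add: x_def)
    have eE: "(\<Sum>v\<in>V. f e' v * x v) = 0" if "e' \<in> E" for e'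
    proof -
      have "0 = (\<Sum>v\<in>V'. f' e' v * x' v)" using x' that by auto
      also have "\<dots> = (\<Sum>v\<in>V'. f e' v * x' v) - f e' v0 / f e v0 * (\<Sum>v\<in>V'. f e v * x' v)"
        by (simp add: f'_def algebra_simps sum_subtractf sum_distrib_left)
      also have "\<dots> = (\<Sum>v\<in>V. f e' v * x v)"
        by (simp add: split xV' cong: sum.cong) (simp add: x_def)
      finally show ?thesis by simp
    qed
    obtain w where w: "w \<in> V'" "x' w \<noteq> 0" using x' by auto
    have "\<exists>v\<in>V. x v \<noteq> 0" using w xV'[of w] by (metis DiffD1 V'_def)
    then show ?thesis using e0 eE by (intro exI[of _ x]) auto
  qed
qed

lemma tri_sum: "(\<Sum>i<N. N - i) = N * (N + 1) div 2" for N :: nat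
proof (induction N)
  case 0 then show ?case by simp
next
  case (Suc N)
  have "(\<Sum>i<Suc N. Suc N - i) = (\<Sum>i<N. (N - i) + 1) + 1"
    by (simp add: Suc_diff_le less_imp_le_nat)
  also have "\<dots> = N * (N + 1) div 2 + N + 1" using Suc by (simp add: sum.distrib del: Suc_eq_plus1 add: Suc_eq_plus1[symmetric] sum_Suc)
  also have "\<dots> = Suc N * (Suc N + 1) div 2" by simp
  finally show ?case .
qed

lemma tri_int: "int (N * (N + 1) div 2) = int N * (int N + 1) div 2"
  by (simp add: zdiv_int algebra_simps)

lemma tri_le: "int (nat x * (nat x + 1) div 2) \<le> x * (x + 1) div 2"
proof (cases "x \<ge> 0")
  case True then show ?thesis using tri_int[of "nat x"] by simp
next
  case False
  then have "0 \<le> x * (x + 1)" by (simp add: mult_nonpos_nonpos)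
  then show ?thesis using False by simp
qed

lemma eff_of_chi:
  assumes d0: "0 \<le> d" and c1: "1 \<le> chi n d m"
  shows "effective n p d m"
proof -
  define D where "D = nat d"
  define V where "V = Sigma {..D} (\<lambda>a. {..D-a})"
  define E where "E = Sigma {..<n} (\<lambda>k. Sigma {..<nat (m k)} (\<lambda>i. {..<nat (m k) - i}))"
  define f where "f = (\<lambda>(k, i, j) (a, b). of_nat (a choose i) * of_nat (b choose j)
       * fst (p k) ^ (a - i) * snd (p k) ^ (b - j) :: complex)"
  have finV: "finite V" unfolding V_def by auto
  have finE: "finite E" unfolding E_def by auto
  have cV: "card V = (\<Sum>a<Suc D. Suc D - a)" unfolding V_def
    by (simp add: card_SigmaI lessThan_Suc_atMost[symmetric] Suc_diff_le)
  have cV2: "int (card V) = (d + 1) * (d + 2) div 2"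
    unfolding cV tri_sum tri_int using d0 by (simp add: D_def algebra_simps)
  have cE: "card E = (\<Sum>k<n. nat (m k) * (nat (m k) + 1) div 2)" unfolding E_def
    by (simp add: card_SigmaI tri_sum)
  have "int (card E) \<le> (\<Sum>k<n. m k * (m k + 1) div 2)"
    unfolding cE of_nat_sum by (intro sum_mono tri_le)
  then have "int (card E) < int (card V)" using c1 cV2 unfolding chi_def by linarith
  then have "card E < card V" by simp
  from homog_solve[OF finE finV this, of f] obtain x where
    x: "\<exists>v\<in>V. x v \<noteq> 0" "\<forall>e\<in>E. (\<Sum>v\<in>V. f e v * x v) = 0" by blast
  show ?thesis unfolding effective_def
  proof (intro conjI exI[of _ x])
    show "0 \<le> d" by fact
    from x(1) obtain a b where "(a, b) \<in> V" "x (a, b) \<noteq> 0" by auto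
    then show "\<exists>a b. a + b \<le> nat d \<and> x (a, b) \<noteq> 0" by (intro exI[of _ a] exI[of _ b]) (auto simp: V_def D_def)
    show "\<forall>k<n. vanishes_to_order (nat d) x (p k) (m k)"
    proof (intro allI impI)
      fix k assume k: "k < n"
      show "vanishes_to_order (nat d) x (p k) (m k)" unfolding vanishes_to_order_def
      proof (intro allI impI)
        fix i j assume ij: "int (i + j) < m k"
        have "(k, i, j) \<in> E" using k ij by (auto simp: E_def)
        then have "(\<Sum>v\<in>V. f (k, i, j) v * x v) = 0" using x(2) by blast
        moreover have "(\<Sum>v\<in>V. f (k, i, j) v * x v) =
          (\<Sum>a\<le>nat d. \<Sum>b\<le>nat d - a. x (a, b) * of_nat (a choose i) * of_nat (b choose j)
             * fst (p k) ^ (a - i) * snd (p k) ^ (b - j))"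
          unfolding V_def D_def by (subst sum.Sigma) (auto simp: f_def algebra_simps intro!: sum.cong split: prod.splits)
        ultimately show "(\<Sum>a\<le>nat d. \<Sum>b\<le>nat d - a. x (a, b) * of_nat (a choose i) * of_nat (b choose j)
             * fst (p k) ^ (a - i) * snd (p k) ^ (b - j)) = 0" by simp
      qed
    qed
  qed
qed

lemma g_dec: "((x::int) - 1) * (x - 1 + 1) div 2 = x * (x + 1) div 2 - x"
proof -
  have "(x - 1) * (x - 1 + 1) = x * (x + 1) + (-x) * 2" by (simp add: algebra_simps)
  then show ?thesis by simp
qed

lemma g_inc: "((x::int) + 1) * (x + 1 + 1) div 2 = x * (x + 1) div 2 + x + 1"
proof -
  have "(x + 1) * (x + 1 + 1) = x * (x + 1) + (x + 1) * 2" by (simp add: algebra_simps)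
  then show ?thesis by simp
qed

lemma g_nonneg: "0 \<le> (x::int) * (x + 1) div 2"
proof (cases "x \<ge> 0")
  case True then show ?thesis by simp
next
  case False then have "0 \<le> x * (x + 1)" by (simp add: mult_nonpos_nonpos)
  then show ?thesis by simp
qed

lemma sum_upd2:
  fixes h :: "'c \<Rightarrow> 'b::ab_group_add" and m :: "'a \<Rightarrow> 'c"
  assumes "finite A" "i \<in> A" "j \<in> A" "i \<noteq> j"
  shows "(\<Sum>k\<in>A. h ((m(i := u, j := w)) k)) = (\<Sum>k\<in>A. h (m k)) - h (m i) - h (m j) + h u + h w"
proof -
  let ?F = "\<lambda>k. h ((m(i := u, j := w)) k)"
  have r1: "sum g A = g i + sum g (A - {i})" for g :: "'a \<Rightarrow> 'b"
    using assms by (simp add: sum.remove)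
  have r2: "sum g (A - {i}) = g j + sum g (A - {i} - {j})" for g :: "'a \<Rightarrow> 'b"
    using assms by (simp add: sum.remove)
  have eq: "sum ?F (A - {i} - {j}) = sum (\<lambda>k. h (m k)) (A - {i} - {j})"
    by (intro sum.cong) auto
  show ?thesis
    unfolding r1[of ?F] r1[of "\<lambda>k. h (m k)"] r2[of ?F] r2[of "\<lambda>k. h (m k)"] eq
    using assms by (simp add: algebra_simps)
qed

lemma step_props:
  assumes nb: "\<not> balanced n m" and st: "bal_step n m m'"
  shows "(\<Sum>k<n. m' k) = (\<Sum>k<n. m k)"
    and "(\<Sum>k<n. m' k * (m' k + 1) div 2) + 1 \<le> (\<Sum>k<n. m k * (m k + 1) div 2)"
    and "chi n d m' \<ge> chi n d m + 1"
proof -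
  obtain i j where ij: "i < n" "j < n" "\<forall>k<n. m k \<le> m i" "\<forall>k<n. m j \<le> m k"
    and m': "m' = m(i := m i - 1, j := m j + 1)" using st unfolding bal_step_def by blast
  obtain a b where ab: "a < n" "b < n" "\<bar>m a - m b\<bar> > 1" using nb unfolding balanced_def by force
  have "m a \<le> m i" "m b \<le> m i" "m j \<le> m a" "m j \<le> m b" using ij ab by auto
  then have gap: "m i - m j \<ge> 2" using ab by linarith
  then have "i \<noteq> j" by auto
  show "(\<Sum>k<n. m' k) = (\<Sum>k<n. m k)"
    unfolding m' using sum_upd2[of "{..<n}" i j id m "m i - 1" "m j + 1"] ij \<open>i \<noteq> j\<close> by simp
  have G: "(\<Sum>k<n. m' k * (m' k + 1) div 2) = (\<Sum>k<n. m k * (m k + 1) div 2) - (m i - m j - 1)"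
    unfolding m' using sum_upd2[of "{..<n}" i j "\<lambda>x::int. x * (x + 1) div 2" m "m i - 1" "m j + 1"] ij \<open>i \<noteq> j\<close>
    using g_dec[of "m i"] g_inc[of "m j"] by (simp add: algebra_simps)
  show "(\<Sum>k<n. m' k * (m' k + 1) div 2) + 1 \<le> (\<Sum>k<n. m k * (m k + 1) div 2)"
    using G gap by linarith
  then show "chi n d m' \<ge> chi n d m + 1" unfolding chi_def by linarith
qed

lemma steps_chain:
  assumes "ms 0 = m" "\<forall>s<k. \<not> balanced n (ms s) \<and> bal_step n (ms s) (ms (Suc s))"
  shows "s \<le> k \<Longrightarrow> (\<Sum>i<n. ms s i) = (\<Sum>i<n. m i) \<and> chi n d (ms s) \<ge> chi n d m + int s"
proof (induction s)
  case 0 then show ?case using assms by simp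
next
  case (Suc s)
  then have "s < k" by simp
  then have "\<not> balanced n (ms s)" "bal_step n (ms s) (ms (Suc s))" using assms by auto
  from step_props(1)[OF this] step_props(3)[OF this, where d=d] Suc show ?case by simp
qed

lemma exists_steps: "\<exists>k. steps_away n m k"
proof -
  have "\<forall>m. nat (\<Sum>k<n. m k * (m k + 1) div 2) = N \<longrightarrow> (\<exists>k. steps_away n m k)" for N
  proof (induction N rule: less_induct)
    case (less N)
    show ?case
    proof (intro allI impI)
      fix m :: "nat \<Rightarrow> int" assume N: "nat (\<Sum>k<n. m k * (m k + 1) div 2) = N"
      show "\<exists>k. steps_away n m k"
      proof (cases "balanced n m")
        case True
        then have "steps_away n m 0" unfolding steps_away_def by (intro exI[of _ "\<lambda>_. m"]) auto
        then show ?thesis by blast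
      next
        case False
        then have n0: "n > 0" unfolding balanced_def by auto
        have fin: "finite (m ` {..<n})" "m ` {..<n} \<noteq> {}" using n0 by auto
        obtain i where i: "i < n" "m i = Max (m ` {..<n})" using Max_in[OF fin] by auto
        obtain j where j: "j < n" "m j = Min (m ` {..<n})" using Min_in[OF fin] by auto
        define m' where "m' = m(i := m i - 1, j := m j + 1)"
        have st: "bal_step n m m'" unfolding bal_step_def m'_def using i j fin
          by (intro exI[of _ i] exI[of _ j]) auto
        from step_props(2)[OF False st]
        have "nat (\<Sum>k<n. m' k * (m' k + 1) div 2) < N"
          using N sum_nonneg[of "{..<n}" "\<lambda>k. m' k * (m' k + 1) div 2"] g_nonneg by auto
        with less.IH obtain k ms where ms: "ms 0 = m'"
          "\<forall>s<k. \<not> balanced n (ms s) \<and> bal_step n (ms s) (ms (Suc s))" "balanced n (ms k)"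
          unfolding steps_away_def by blast
        define ms' where "ms' = (\<lambda>s. if s = 0 then m else ms (s - 1))"
        have "steps_away n m (Suc k)" unfolding steps_away_def
        proof (intro exI[of _ ms'] conjI)
          show "ms' 0 = m" by (simp add: ms'_def)
          show "balanced n (ms' (Suc k))" using ms by (simp add: ms'_def)
          show "\<forall>s<Suc k. \<not> balanced n (ms' s) \<and> bal_step n (ms' s) (ms' (Suc s))"
          proof (intro allI impI)
            fix s assume "s < Suc k"
            then show "\<not> balanced n (ms' s) \<and> bal_step n (ms' s) (ms' (Suc s))"
              using ms False st by (cases s) (auto simp: ms'_def)
          qed
        qed
        then show ?thesis by blast
      qed
    qed
  qed
  then show ?thesis by blast
qed

lemma g_twice: "((x::int) * (x + 1) div 2) * 2 = x * (x + 1)"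
proof -
  have "even (x * (x + 1))" by (cases "even x") auto
  then show ?thesis by simp
qed

lemma cs_sum:
  fixes a :: "nat \<Rightarrow> real"
  shows "(\<Sum>k<n. a k)^2 \<le> real n * (\<Sum>k<n. (a k)^2)"
proof (cases "n = 0")
  case True then show ?thesis by simp
next
  case False
  let ?S = "\<Sum>k<n. a k"
  have "0 \<le> (\<Sum>k<n. (real n * a k - ?S)^2)" by (intro sum_nonneg) auto
  also have "\<dots> = (\<Sum>k<n. real n^2 * (a k)^2 - 2 * real n * ?S * a k + ?S^2)"
    by (intro sum.cong) (auto simp: power2_eq_square algebra_simps)
  also have "\<dots> = real n^2 * (\<Sum>k<n. (a k)^2) - 2 * real n * ?S * ?S + real n * ?S^2"
    by (simp add: sum.distrib sum_subtractf sum_distrib_left)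
  also have "\<dots> = real n * (real n * (\<Sum>k<n. (a k)^2) - ?S^2)"
    by (simp add: power2_eq_square algebra_simps)
  finally have "0 \<le> real n * (\<Sum>k<n. (a k)^2) - ?S^2" using False
    by (simp add: zero_le_mult_iff)
  then show ?thesis by simp
qed

lemma chi_bound:
  assumes n0: "n > 0" and t0: "t > 0" and tn: "t^2 > real n" and d0: "0 \<le> d"
    and ineq: "2 * At_dot n t d m \<le> At_dot_K n t"
  shows "8 * real_of_int (chi n d m) < real n - 1"
proof -
  define x where "x = real_of_int d"
  define s where "s = real_of_int (\<Sum>k<n. m k)"
  define q where "q = (\<Sum>k<n. (real_of_int (m k))^2)"
  define w where "w = x + 3/2"
  define u where "u = s + real n / 2"
  have c2: "chi n d m * 2 = (d + 1) * (d + 2) - (\<Sum>k<n. m k * (m k + 1))"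
  proof -
    have "(d + 1) * (d + 2) div 2 * 2 = (d + 1) * (d + 2)"
      using g_twice[of "d + 1"] by (simp add: algebra_simps)
    moreover have "(\<Sum>k<n. m k * (m k + 1) div 2) * 2 = (\<Sum>k<n. m k * (m k + 1))"
      by (simp add: sum_distrib_right g_twice)
    ultimately show ?thesis unfolding chi_def by (simp add: algebra_simps)
  qed
  have c2r: "2 * real_of_int (chi n d m) = (x + 1) * (x + 2) - q - s"
  proof -
    have "real_of_int (chi n d m * 2) = real_of_int ((d + 1) * (d + 2) - (\<Sum>k<n. m k * (m k + 1)))"
      using c2 by simp
    then show ?thesis
      by (simp add: x_def q_def s_def power2_eq_square algebra_simps sum.distrib)
  qed
  have cs: "s^2 \<le> real n * q" unfolding s_def q_def using cs_sum[of "\<lambda>k. real_of_int (m k)" n] by simp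
  have uw: "u \<ge> t * w" using ineq unfolding At_dot_def At_dot_K_def u_def w_def s_def x_def
    by (simp add: algebra_simps)
  have w0: "w > 0" using d0 by (simp add: w_def x_def)
  have tw: "t * w > 0" using t0 w0 by simp
  have "u^2 \<ge> (t * w)^2" using uw tw by (intro power_mono) auto
  moreover have "(t * w)^2 > real n * w^2" using tn w0 by (simp add: power_mult_distrib)
  ultimately have key: "real n * w^2 < u^2" by linarith
  have "real n * (8 * real_of_int (chi n d m)) = real n * (4 * ((x + 1) * (x + 2)) - 4 * q - 4 * s)"
  proof -
    have "8 * real_of_int (chi n d m) = 4 * ((x + 1) * (x + 2)) - 4 * q - 4 * s" using c2r by linarith
    then show ?thesis by simp
  qed
  also have "\<dots> \<le> 4 * real n * ((x + 1) * (x + 2)) - 4 * s^2 - 4 * real n * s"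
    using cs by (simp add: algebra_simps)
  also have "\<dots> = 4 * (real n * w^2 - u^2) + real n * (real n - 1)"
    by (simp add: w_def u_def power2_eq_square algebra_simps)
  also have "\<dots> < real n * (real n - 1)" using key by simp
  finally show ?thesis using n0 by simp
qed

theorem proposition4p4:
  fixes n :: nat and p :: "nat \<Rightarrow> complex \<times> complex"
    and d :: int and m :: "nat \<Rightarrow> int" and t :: real
  assumes vg: "very_general n p"
    and eff: "effective n p d m"
    and chi: "chi n d m \<ge> 1"
    and ample: "ample_At n p t"
    and ineq: "2 * At_dot n t d m \<le> At_dot_K n t"
  shows "\<exists>chimax.
     chimax \<in> {chi n d' m' | d' m'. effective n p d' m' \<and> 2 * At_dot n t d' m' \<le> At_dot_K n t} \<and>
     (\<forall>d' m'. effective n p d' m' \<and> 2 * At_dot n t d' m' \<le> At_dot_K n t \<longrightarrow> chi n d' m' \<le> chimax) \<and>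
     (\<exists>k. steps_away n m k) \<and>
     (\<forall>k. steps_away n m k \<longrightarrow> int k \<le> chimax - chi n d m) \<and>
     (10 \<le> n \<and> n \<le> 17 \<longrightarrow> chi n d m = 1 \<and> chimax = 1 \<and> balanced n m)"
proof -
  have d0: "0 \<le> d" using eff unfolding effective_def by blast
  have tn: "t^2 > real n" using ample unfolding ample_At_def by simp
  have "chi n 1 (\<lambda>_. 0) = 3" by (simp add: chi_def)
  then have "effective n p 1 (\<lambda>_. 0)" by (intro eff_of_chi) auto
  moreover have "\<not> ((1::int) = 0 \<and> (\<forall>i<n. (0::int) = 0))" by simp
  ultimately have "At_dot n t 1 (\<lambda>_. 0) > 0" using ample unfolding ample_At_def by blast
  then have t0: "t > 0" by (simp add: At_dot_def)
  have n0: "n > 0"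
  proof (rule ccontr)
    assume "\<not> n > 0"
    then have "n = 0" by simp
    then have "2 * (t * real_of_int d) \<le> - 3 * t" using ineq by (simp add: At_dot_def At_dot_K_def)
    moreover have "0 \<le> t * real_of_int d" using t0 d0 by simp
    ultimately show False using t0 by linarith
  qed
  define CS where "CS = {chi n d' m' | d' m'. effective n p d' m' \<and> 2 * At_dot n t d' m' \<le> At_dot_K n t}"
  have bnd: "8 * real_of_int c < real n - 1" if "c \<in> CS" for c
  proof -
    from that obtain d' m' where "c = chi n d' m'" "effective n p d' m'" "2 * At_dot n t d' m' \<le> At_dot_K n t"
      unfolding CS_def by blast
    moreover have "0 \<le> d'" using \<open>effective n p d' m'\<close> unfolding effective_def by blast
    ultimately show ?thesis using chi_bound[OF n0 t0 tn, of d' m'] by simp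
  qed
  have bnd2: "c \<le> int n" if "c \<in> CS" for c
    using bnd[OF that] by linarith
  have inCS: "chi n d m \<in> CS" unfolding CS_def using eff ineq by blast
  define CS' where "CS' = CS \<inter> {chi n d m..int n}"
  have finCS': "finite CS'" unfolding CS'_def by auto
  have neCS': "CS' \<noteq> {}" unfolding CS'_def using inCS bnd2[OF inCS] by auto
  define chimax where "chimax = Max CS'"
  have cm_in: "chimax \<in> CS" using Max_in[OF finCS' neCS'] unfolding chimax_def CS'_def by auto
  have cm_ge0: "chi n d m \<le> chimax" unfolding chimax_def CS'_def
    using inCS bnd2[OF inCS] finCS' by (intro Max_ge) (auto simp: CS'_def)
  have cm_max: "c \<le> chimax" if "c \<in> CS" for c
  proof (cases "c \<ge> chi n d m")
    case True
    then have "c \<in> CS'" using that bnd2[OF that] by (auto simp: CS'_def)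
    then show ?thesis unfolding chimax_def using finCS' by (intro Max_ge)
  next
    case False then show ?thesis using cm_ge0 by simp
  qed
  have steps: "int k \<le> chimax - chi n d m" if sa: "steps_away n m k" for k
  proof -
    obtain ms where msx: "ms 0 = m \<and> (\<forall>s<k. \<not> balanced n (ms s) \<and> bal_step n (ms s) (ms (Suc s))) \<and> balanced n (ms k)"
      using sa unfolding steps_away_def by blast
    have ms: "ms 0 = m" "\<forall>s<k. \<not> balanced n (ms s) \<and> bal_step n (ms s) (ms (Suc s))"
      using msx by simp_all
    from steps_chain[OF ms, where s=k and d=d] have
      sm: "(\<Sum>i<n. ms k i) = (\<Sum>i<n. m i)" and ch: "chi n d (ms k) \<ge> chi n d m + int k" by auto
    have "effective n p d (ms k)" using d0 ch chi by (intro eff_of_chi) auto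
    moreover have "2 * At_dot n t d (ms k) \<le> At_dot_K n t" using ineq sm by (simp add: At_dot_def)
    ultimately have "chi n d (ms k) \<in> CS" unfolding CS_def by blast
    then have "chi n d (ms k) \<le> chimax" by (rule cm_max)
    then show ?thesis using ch by linarith
  qed
  show ?thesis
  proof (intro exI[of _ chimax] conjI)
    show "chimax \<in> {chi n d' m' | d' m'. effective n p d' m' \<and> 2 * At_dot n t d' m' \<le> At_dot_K n t}"
      using cm_in unfolding CS_def .
    show "\<forall>d' m'. effective n p d' m' \<and> 2 * At_dot n t d' m' \<le> At_dot_K n t \<longrightarrow> chi n d' m' \<le> chimax"
      using cm_max unfolding CS_def by blast
    show "\<exists>k. steps_away n m k" by (rule exists_steps)
    show "\<forall>k. steps_away n m k \<longrightarrow> int k \<le> chimax - chi n d m" using steps by blast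
    show "10 \<le> n \<and> n \<le> 17 \<longrightarrow> chi n d m = 1 \<and> chimax = 1 \<and> balanced n m"
    proof
      assume n17: "10 \<le> n \<and> n \<le> 17"
      have "8 * real_of_int chimax < real n - 1" using bnd[OF cm_in] .
      then have "real_of_int chimax < 2" using n17 by simp
      then have c1: "chimax \<le> 1" by linarith
      then have e1: "chi n d m = 1" "chimax = 1" using chi cm_ge0 by auto
      obtain k where k: "steps_away n m k" using exists_steps by blast
      then have "k = 0" using steps[OF k] e1 by simp
      then have "balanced n m" using k unfolding steps_away_def by auto
      then show "chi n d m = 1 \<and> chimax = 1 \<and> balanced n m" using e1 by simp
    qed
  qed
qed

end
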